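(* Suppose the weights satisfy the discrete Pearson equations $\theta(k+1)w^{(a)}(k+1)=\sigma^{(a)}(k)w^{(a)}(k)$, $k\in\mathbb N_0$, $a\in\{1,2\}$, where $\theta,\sigma^{(1)},\sigma^{(2)}$ are polynomials, $\theta(0)=0$, $\deg\theta=N$ and $\max(\deg\sigma^{(1)},\deg\sigma^{(2)})=M$. Then the Laguerre--Freud matrix $\Psi:=\Pi^{-1}\theta(T)$ is a banded matrix with lower bandwidth $2M$ and upper bandwidth $N$, i.e. $\Psi=(\Lambda^\top)^{2M}\psi^{(-2M)}+\cdots+\psi^{(N)}\Lambda^N$ with diagonal matrices $\psi^{(j)}$, and the following connection formulas hold: \[ \theta(z)B(z-1)=\Psi B(z),\qquad (A^{(a)}(z+1))^\top\sigma^{(a)}(z)=(A^{(a)}(z))^\top\Psi,\quad a\in\{1,2\}. \]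
   Context: Let $w^{(1)},w^{(2)}:\mathbb N_0\to\mathbb C$ be weights, $X(x)=(1,x,x^2,\dots)^\top$, $X^{(1)}(x)=(1,0,x,0,x^2,\dots)^\top$, $X^{(2)}(x)=(0,1,0,x,0,\dots)^\top$, and $\mathscr M=\sum_k X(k)(w^{(1)}(k)X^{(1)}(k)+w^{(2)}(k)X^{(2)}(k))^\top$ the moment matrix (series absolutely convergent). Assume all leading principal minors of $\mathscr M$ are nonzero, so $\mathscr M=S^{-1}H\tilde S^{-\top}$ with $S,\tilde S$ lower unitriangular and $H$ diagonal. Type II polynomials: $B=SX$; type I polynomials: $A^{(a)}=H^{-1}\tilde SX^{(a)}$. $\Lambda$ has ones on the first superdiagonal; $T=S\Lambda S^{-1}$ (so $TB(z)=zB(z)$). $L$ is the Pascal matrix $L_{n,m}=\binom nm$ for $n\ge m$, and $\Pi^{-1}=SL^{-1}S^{-1}$. *)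

theory Defs
  imports Complex_Main "HOL-Computational_Algebra.Polynomial" "Jordan_Normal_Form.Determinant"
begin

type_synonym imat = "nat \<Rightarrow> nat \<Rightarrow> complex"
type_synonym ivec = "nat \<Rightarrow> complex"

text \<open>Product of semi-infinite matrices (entries are series; in all uses below the
  sums have only finitely many nonzero terms).\<close>
definition imul :: "imat \<Rightarrow> imat \<Rightarrow> imat" where
  "imul A B = (\<lambda>i j. \<Sum>k. A i k * B k j)"

definition iid :: imat where
  "iid = (\<lambda>i j. if i = j then 1 else 0)"

definition idiag :: "ivec \<Rightarrow> imat" where
  "idiag h = (\<lambda>i j. if i = j then h i else 0)"

definition itrans :: "imat \<Rightarrow> imat" where
  "itrans A = (\<lambda>i j. A j i)"

definition ipow :: "imat \<Rightarrow> nat \<Rightarrow> imat" where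
  "ipow A n = (imul A ^^ n) iid"

definition ipoly :: "complex poly \<Rightarrow> imat \<Rightarrow> imat" where
  "ipoly p A = (\<lambda>i j. \<Sum>k\<le>degree p. coeff p k * ipow A k i j)"

definition lower_unitri :: "imat \<Rightarrow> bool" where
  "lower_unitri A \<longleftrightarrow> (\<forall>i j. i < j \<longrightarrow> A i j = 0) \<and> (\<forall>i. A i i = 1)"

definition lower_tri :: "imat \<Rightarrow> bool" where
  "lower_tri A \<longleftrightarrow> (\<forall>i j. i < j \<longrightarrow> A i j = 0)"

definition Lam :: imat where
  "Lam = (\<lambda>i j. if j = Suc i then 1 else 0)"

definition Pascal :: imat where
  "Pascal = (\<lambda>n m. of_nat (n choose m))"

definition Xv :: "complex \<Rightarrow> ivec" where
  "Xv x = (\<lambda>m. x ^ m)"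
definition X1 :: "complex \<Rightarrow> ivec" where
  "X1 x = (\<lambda>m. if even m then x ^ (m div 2) else 0)"
definition X2 :: "complex \<Rightarrow> ivec" where
  "X2 x = (\<lambda>m. if odd m then x ^ (m div 2) else 0)"

definition moment :: "(nat \<Rightarrow> complex) \<Rightarrow> (nat \<Rightarrow> complex) \<Rightarrow> imat" where
  "moment w1 w2 = (\<lambda>n m. \<Sum>k. Xv (of_nat k) n *
       (w1 k * X1 (of_nat k) m + w2 k * X2 (of_nat k) m))"

definition lead_minor :: "imat \<Rightarrow> nat \<Rightarrow> complex" where
  "lead_minor A n = det (mat (Suc n) (Suc n) (\<lambda>(i, j). A i j))"

text \<open>Type II polynomials B = S X, and type I polynomials A^(a) = H^{-1} S~ X^(a)
  (H = diag h).\<close>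
definition typeII :: "imat \<Rightarrow> complex \<Rightarrow> ivec" where
  "typeII S z = (\<lambda>n. \<Sum>m\<le>n. S n m * Xv z m)"
definition typeI :: "ivec \<Rightarrow> imat \<Rightarrow> (complex \<Rightarrow> ivec) \<Rightarrow> complex \<Rightarrow> ivec" where
  "typeI h St Xa z = (\<lambda>n. (1 / h n) * (\<Sum>m\<le>n. St n m * Xa z m))"

end

theory Submission
  imports Defs
begin

definition ubnd :: "nat \<Rightarrow> imat \<Rightarrow> bool" where
  "ubnd c A \<longleftrightarrow> (\<forall>i j. i + c < j \<longrightarrow> A i j = 0)"

definition icol :: "ivec \<Rightarrow> imat" where "icol v = (\<lambda>i j. v i)"

lemma ubndD: "ubnd c A \<Longrightarrow> i + c < j \<Longrightarrow> A i j = 0"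
  unfolding ubnd_def by blast

lemma ubnd_mono: "ubnd c A \<Longrightarrow> c \<le> d \<Longrightarrow> ubnd d A"
  unfolding ubnd_def by auto

lemma imul_ubnd: assumes "ubnd c A"
  shows "imul A B i j = (\<Sum>k\<le>i+c. A i k * B k j)"
  unfolding imul_def
  by (rule suminf_finite) (use ubndD[OF assms] in auto)

lemma imul_ubnd': assumes "ubnd c A" "c \<le> d"
  shows "imul A B i j = (\<Sum>k\<le>i+d. A i k * B k j)"
  using imul_ubnd[OF ubnd_mono[OF assms]] .

lemma ubnd_imul: assumes "ubnd a A" "ubnd b B" shows "ubnd (a+b) (imul A B)"
  unfolding ubnd_def
proof (intro allI impI)
  fix i j assume "i + (a+b) < j"
  then show "imul A B i j = 0"
    unfolding imul_ubnd[OF assms(1)] by (intro sum.neutral) (auto intro!: ubndD[OF assms(2)])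
qed

lemma imul_assoc: assumes A: "ubnd a A" and B: "ubnd b B"
  shows "imul (imul A B) C = imul A (imul B C)"
proof (intro ext)
  fix i j
  have AB: "ubnd (a+b) (imul A B)" using ubnd_imul[OF A B] .
  have R: "imul B C l j = (\<Sum>k\<le>i+a+b. B l k * C k j)" if "l \<le> i+a" for l
    using imul_ubnd'[OF B, of "i+a+b-l" C l j] that by simp
  have "imul (imul A B) C i j = (\<Sum>k\<le>i+(a+b). (\<Sum>l\<le>i+a. A i l * B l k) * C k j)"
    unfolding imul_ubnd[OF AB] imul_ubnd[OF A] ..
  also have "\<dots> = (\<Sum>l\<le>i+a. A i l * (\<Sum>k\<le>i+a+b. B l k * C k j))"
    by (simp add: sum_distrib_left sum_distrib_right mult.assoc add.assoc) (rule sum.swap)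
  also have "\<dots> = (\<Sum>l\<le>i+a. A i l * imul B C l j)"
    by (intro sum.cong refl) (simp add: R)
  also have "\<dots> = imul A (imul B C) i j" unfolding imul_ubnd[OF A] ..
  finally show "imul (imul A B) C i j = imul A (imul B C) i j" .
qed

lemma ubnd_iid: "ubnd 0 iid" unfolding ubnd_def iid_def by auto
lemma ubnd_idiag: "ubnd 0 (idiag h)" unfolding ubnd_def idiag_def by auto
lemma ubnd_Lam: "ubnd 1 Lam" unfolding ubnd_def Lam_def by auto
lemma ubnd_Pascal: "ubnd 0 Pascal" unfolding ubnd_def Pascal_def by auto
lemma ubnd_lower_tri: "lower_tri A \<Longrightarrow> ubnd 0 A" unfolding ubnd_def lower_tri_def by auto
lemma ubnd_lower_unitri: "lower_unitri A \<Longrightarrow> ubnd 0 A" unfolding ubnd_def lower_unitri_def by auto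

lemma imul_iid_left: "imul iid A = A"
proof (intro ext)
  fix i j show "imul iid A i j = A i j"
  proof -
    have e: "(\<lambda>k. iid i k * A k j) = (\<lambda>k. if k = i then A i j else 0)" by (auto simp: iid_def)
    show ?thesis unfolding imul_ubnd[OF ubnd_iid] e by simp
  qed
qed

lemma imul_idiag_left: "imul (idiag h) A i j = h i * A i j"
proof -
  have e: "(\<lambda>k. idiag h i k * A k j) = (\<lambda>k. if k = i then h i * A i j else 0)" by (auto simp: idiag_def)
  show ?thesis unfolding imul_ubnd[OF ubnd_idiag] e by simp
qed

lemma imul_scal: assumes "ubnd c A"
  shows "imul A (\<lambda>i j. s * V i j) = (\<lambda>i j. s * imul A V i j)"
  by (intro ext) (simp add: imul_ubnd[OF assms] sum_distrib_left mult.left_commute)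

lemma ipow_0: "ipow A 0 = iid" unfolding ipow_def by simp
lemma ipow_Suc: "ipow A (Suc k) = imul A (ipow A k)" unfolding ipow_def by simp

lemma ubnd_ipow: assumes "ubnd 1 A" shows "ubnd k (ipow A k)"
proof (induction k)
  case 0 then show ?case by (simp add: ipow_0 ubnd_iid)
next
  case (Suc k) then show ?case using ubnd_imul[OF assms Suc] by (simp add: ipow_Suc)
qed

lemma ubnd_ipoly: assumes "ubnd 1 A" shows "ubnd (degree p) (ipoly p A)"
  unfolding ubnd_def ipoly_def
  by (auto intro!: sum.neutral ubndD[OF ubnd_ipow[OF assms]])

lemma imul_ipoly: assumes "ubnd 1 A"
  shows "imul (ipoly p A) V i j = (\<Sum>k\<le>degree p. coeff p k * imul (ipow A k) V i j)"
proof -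
  have "imul (ipoly p A) V i j = (\<Sum>l\<le>i+degree p. (\<Sum>k\<le>degree p. coeff p k * ipow A k i l) * V l j)"
    by (subst imul_ubnd[OF ubnd_ipoly[OF assms]]) (simp add: ipoly_def)
  also have "\<dots> = (\<Sum>k\<le>degree p. coeff p k * (\<Sum>l\<le>i+degree p. ipow A k i l * V l j))"
    by (simp add: sum_distrib_left sum_distrib_right mult.assoc) (rule sum.swap)
  also have "\<dots> = (\<Sum>k\<le>degree p. coeff p k * imul (ipow A k) V i j)"
    by (intro sum.cong refl) (simp add: imul_ubnd'[OF ubnd_ipow[OF assms]])
  finally show ?thesis .
qed

lemma typeII_col: assumes "ubnd 0 S" shows "icol (typeII S z) = imul S (icol (Xv z))"
  by (intro ext) (simp add: imul_ubnd[OF assms] icol_def typeII_def)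

lemma Lam_X: "imul Lam (icol (Xv z)) = (\<lambda>i j. z * icol (Xv z) i j)"
proof (intro ext)
  fix i j
  have e: "(\<lambda>k. Lam i k * icol (Xv z) k j) = (\<lambda>k. if k = Suc i then z ^ Suc i else 0)"
    by (auto simp: Lam_def icol_def Xv_def)
  show "imul Lam (icol (Xv z)) i j = z * icol (Xv z) i j"
    unfolding imul_ubnd[OF ubnd_Lam] e by (simp add: icol_def Xv_def)
qed

lemma Pascal_X: "imul Pascal (icol (Xv (z - 1))) = icol (Xv z)"
proof (intro ext)
  fix i j
  have "imul Pascal (icol (Xv (z - 1))) i j = (\<Sum>k\<le>i. of_nat (i choose k) * (z - 1) ^ k * 1 ^ (i - k))"
    unfolding imul_ubnd[OF ubnd_Pascal] by (simp add: Pascal_def icol_def Xv_def)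
  also have "\<dots> = ((z - 1) + 1) ^ i" by (rule binomial_ring[symmetric])
  finally show "imul Pascal (icol (Xv (z - 1))) i j = icol (Xv z) i j" by (simp add: icol_def Xv_def)
qed

lemma Li_X: assumes "lower_tri Li" "imul Li Pascal = iid"
  shows "imul Li (icol (Xv z)) = icol (Xv (z - 1))"
proof -
  have "imul Li (icol (Xv z)) = imul Li (imul Pascal (icol (Xv (z - 1))))" by (simp add: Pascal_X)
  also have "\<dots> = imul (imul Li Pascal) (icol (Xv (z - 1)))"
    by (rule imul_assoc[symmetric, OF ubnd_lower_tri[OF assms(1)] ubnd_Pascal])
  finally show ?thesis by (simp add: assms imul_iid_left)
qed

lemma T_B: assumes S: "ubnd 0 S" and Si: "ubnd 0 Si" and inv: "imul Si S = iid"
  shows "imul (imul (imul S Lam) Si) (icol (typeII S z)) = (\<lambda>i j. z * icol (typeII S z) i j)"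
proof -
  have SL: "ubnd (0+1) (imul S Lam)" by (rule ubnd_imul[OF S ubnd_Lam])
  have "imul (imul (imul S Lam) Si) (icol (typeII S z)) = imul (imul S Lam) (imul Si (imul S (icol (Xv z))))"
    by (simp add: imul_assoc[OF SL Si] typeII_col[OF S])
  also have "\<dots> = imul (imul S Lam) (icol (Xv z))"
    by (simp add: imul_assoc[symmetric, OF Si S] inv imul_iid_left)
  also have "\<dots> = imul S (\<lambda>i j. z * icol (Xv z) i j)"
    by (simp add: imul_assoc[OF S ubnd_Lam] Lam_X)
  also have "\<dots> = (\<lambda>i j. z * icol (typeII S z) i j)"
    by (simp add: imul_scal[OF S] typeII_col[OF S])
  finally show ?thesis .
qed

lemma Tpow_B: assumes T: "ubnd 1 T" and TB: "imul T V = (\<lambda>i j. z * V i j)"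
  shows "imul (ipow T k) V = (\<lambda>i j. z ^ k * V i j)"
proof (induction k)
  case 0 then show ?case by (simp add: ipow_0 imul_iid_left)
next
  case (Suc k)
  have "imul (ipow T (Suc k)) V = imul T (imul (ipow T k) V)"
    by (simp add: ipow_Suc imul_assoc[OF T ubnd_ipow[OF T]])
  also have "\<dots> = (\<lambda>i j. z ^ Suc k * V i j)"
    by (simp add: Suc imul_scal[OF T] TB mult.assoc mult.commute mult.left_commute)
  finally show ?case .
qed

lemma Tpoly_B: assumes T: "ubnd 1 T" and TB: "imul T V = (\<lambda>i j. z * V i j)"
  shows "imul (ipoly p T) V = (\<lambda>i j. poly p z * V i j)"
  by (intro ext) (simp add: imul_ipoly[OF T] Tpow_B[OF T TB] poly_altdef sum_distrib_right mult.assoc)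

lemma imul_idiag_right: assumes "ubnd c A" shows "imul A (idiag h) i k = A i k * h k"
proof -
  have e: "(\<lambda>l. A i l * idiag h l k) = (\<lambda>l. if l = k then A i k * h k else 0)"
    by (auto simp: idiag_def)
  show ?thesis
  proof (cases "k \<le> i + c")
    case True then show ?thesis unfolding imul_ubnd[OF assms] e by simp
  next
    case False then show ?thesis unfolding imul_ubnd[OF assms] e using ubndD[OF assms, of i k] by simp
  qed
qed

lemma moment_entry:
  assumes Si: "lower_unitri Si" and gb: "Mo = imul (imul Si (idiag h)) (itrans Sti)"
  shows "Mo i j = (\<Sum>k\<le>i. Si i k * (h k * Sti j k))"
proof -
  have u: "ubnd 0 Si" using ubnd_lower_unitri[OF Si] .
  have u2: "ubnd (0+0) (imul Si (idiag h))" using ubnd_imul[OF u ubnd_idiag] .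
  show ?thesis unfolding gb imul_ubnd[OF u2]
    by (simp add: imul_idiag_right[OF u] itrans_def mult.assoc)
qed

lemma h_nonzero:
  assumes Si: "lower_unitri Si" and Sti: "lower_unitri Sti"
    and gb: "Mo = imul (imul Si (idiag h)) (itrans Sti)"
    and minors: "\<And>n. lead_minor Mo n \<noteq> 0"
  shows "h n \<noteq> 0"
proof -
  let ?n = "Suc n"
  define A where "A = mat ?n ?n (\<lambda>(i,k). Si i k)"
  define C where "C = mat ?n ?n (\<lambda>(k,j). h k * Sti j k)"
  have AC: "mat ?n ?n (\<lambda>(i, j). Mo i j) = A * C"
  proof (rule eq_matI)
    fix i j assume i: "i < dim_row (A * C)" and j: "j < dim_col (A * C)"
    then have i': "i < ?n" and j': "j < ?n" by (auto simp: A_def C_def)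
    have "(A * C) $$ (i, j) = (\<Sum>k\<in>{0..<?n}. Si i k * (h k * Sti j k))"
      using i' j' by (simp add: A_def C_def scalar_prod_def)
    also have "\<dots> = (\<Sum>k\<le>i. Si i k * (h k * Sti j k))"
      using i' Si unfolding lower_unitri_def
      by (intro sum.mono_neutral_right) auto
    also have "\<dots> = Mo i j" using moment_entry[OF Si gb] by simp
    finally show "mat ?n ?n (\<lambda>(i, j). Mo i j) $$ (i, j) = (A * C) $$ (i, j)"
      using i' j' by simp
  qed (auto simp: A_def C_def)
  have dA: "det A = 1"
  proof -
    have "det A = prod_list (diag_mat A)"
      by (rule det_lower_triangular[of ?n]) (use Si in \<open>auto simp: A_def lower_unitri_def\<close>)
    also have "diag_mat A = map (\<lambda>i. 1) [0..<?n]"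
      using Si by (auto simp: diag_mat_def A_def lower_unitri_def)
    finally show ?thesis by (simp add: map_replicate_const)
  qed
  have dC: "det C = prod_list (map h [0..<?n])"
  proof -
    have "det C = prod_list (diag_mat C)"
      by (rule det_upper_triangular) (use Sti in \<open>auto simp: C_def lower_unitri_def\<close>)
    also have "diag_mat C = map h [0..<?n]"
      using Sti by (auto simp: diag_mat_def C_def lower_unitri_def)
    finally show ?thesis .
  qed
  have "det (A * C) = det A * det C"
    by (rule det_mult) (auto simp: A_def C_def)
  then have "prod_list (map h [0..<?n]) \<noteq> 0"
    using minors[of n] AC dA dC unfolding lead_minor_def by simp
  then show ?thesis by (auto simp: prod_list_zero_iff)
qed

definition Ew :: "(nat \<Rightarrow> complex) \<Rightarrow> (nat \<Rightarrow> complex) \<Rightarrow> nat \<Rightarrow> nat \<Rightarrow> complex" where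
  "Ew w1 w2 j k = w1 k * X1 (of_nat k) j + w2 k * X2 (of_nat k) j"

lemma summ_E:
  assumes a1: "\<And>n. summable (\<lambda>k. norm ((of_nat k :: complex) ^ n * w1 k))"
    and a2: "\<And>n. summable (\<lambda>k. norm ((of_nat k :: complex) ^ n * w2 k))"
  shows "summable (\<lambda>k. (of_nat k :: complex) ^ i * Ew w1 w2 j k)"
proof (cases "even j")
  case True
  have "(\<lambda>k. (of_nat k :: complex) ^ i * Ew w1 w2 j k) = (\<lambda>k. (of_nat k :: complex) ^ (i + j div 2) * w1 k)"
    using True by (auto simp: Ew_def X1_def X2_def power_add)
  then show ?thesis using summable_norm_cancel[OF a1[of "i + j div 2"]] by simp
next
  case False
  have "(\<lambda>k. (of_nat k :: complex) ^ i * Ew w1 w2 j k) = (\<lambda>k. (of_nat k :: complex) ^ (i + j div 2) * w2 k)"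
    using False by (auto simp: Ew_def X1_def X2_def power_add)
  then show ?thesis using summable_norm_cancel[OF a2[of "i + j div 2"]] by simp
qed

lemma summ_BE:
  assumes a1: "\<And>n. summable (\<lambda>k. norm ((of_nat k :: complex) ^ n * w1 k))"
    and a2: "\<And>n. summable (\<lambda>k. norm ((of_nat k :: complex) ^ n * w2 k))"
  shows "summable (\<lambda>k. typeII S (of_nat k) n * Ew w1 w2 j k)"
  unfolding typeII_def Xv_def sum_distrib_right mult.assoc
  by (intro summable_sum summable_mult summ_E[OF a1 a2])

lemma moment_E: "moment w1 w2 i j = (\<Sum>k. (of_nat k :: complex) ^ i * Ew w1 w2 j k)"
  unfolding moment_def Ew_def Xv_def ..

lemma BX:
  assumes a1: "\<And>n. summable (\<lambda>k. norm ((of_nat k :: complex) ^ n * w1 k))"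
    and a2: "\<And>n. summable (\<lambda>k. norm ((of_nat k :: complex) ^ n * w2 k))"
    and S: "lower_unitri S" and Si: "lower_unitri Si" and inv: "imul S Si = iid"
    and gb: "moment w1 w2 = imul (imul Si (idiag h)) (itrans Sti)"
  shows "(\<Sum>k. typeII S (of_nat k) n * Ew w1 w2 j k) = h n * Sti j n"
proof -
  have uS: "ubnd 0 S" and uSi: "ubnd 0 Si" using S Si by (auto intro: ubnd_lower_unitri)
  have uSH: "ubnd (0+0) (imul Si (idiag h))" by (rule ubnd_imul[OF uSi ubnd_idiag])
  have "(\<Sum>k. typeII S (of_nat k) n * Ew w1 w2 j k) = (\<Sum>k. \<Sum>i\<le>n. S n i * ((of_nat k) ^ i * Ew w1 w2 j k))"
    unfolding typeII_def Xv_def sum_distrib_right mult.assoc ..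
  also have "\<dots> = (\<Sum>i\<le>n. S n i * (\<Sum>k. (of_nat k) ^ i * Ew w1 w2 j k))"
    by (subst suminf_sum) (auto intro!: summable_mult summ_E[OF a1 a2] simp: suminf_mult summ_E[OF a1 a2])
  also have "\<dots> = imul S (moment w1 w2) n j"
    unfolding imul_ubnd[OF uS] moment_E by simp
  also have "imul S (moment w1 w2) = imul (imul (imul S Si) (idiag h)) (itrans Sti)"
    unfolding gb imul_assoc[OF uS uSH] imul_assoc[OF uS uSi] ..
  also have "\<dots> n j = h n * Sti j n"
    by (simp add: inv imul_iid_left imul_idiag_left itrans_def)
  finally show ?thesis .
qed

lemma Q_eq: "w1 k * typeI h St X1 z m + w2 k * typeI h St X2 z m
   = (1 / h m) * (\<Sum>j\<le>m. St m j * (w1 k * X1 z j + w2 k * X2 z j))"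
  unfolding typeI_def by (simp add: sum_distrib_left distrib_left sum.distrib algebra_simps)

lemma Q_eq': "w1 k * typeI h St X1 (of_nat k) m + w2 k * typeI h St X2 (of_nat k) m
   = (1 / h m) * (\<Sum>j\<le>m. St m j * Ew w1 w2 j k)"
  unfolding Q_eq Ew_def ..

lemma summ_BQ:
  assumes a1: "\<And>n. summable (\<lambda>k. norm ((of_nat k :: complex) ^ n * w1 k))"
    and a2: "\<And>n. summable (\<lambda>k. norm ((of_nat k :: complex) ^ n * w2 k))"
  shows "summable (\<lambda>k. typeII S (of_nat k) n * (w1 k * typeI h St X1 (of_nat k) m + w2 k * typeI h St X2 (of_nat k) m))"
  unfolding Q_eq' sum_distrib_left
  by (intro summable_sum summable_mult summable_mult2 summ_BE[OF a1 a2]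
      | subst mult.left_commute)+

lemma biorth:
  assumes a1: "\<And>n. summable (\<lambda>k. norm ((of_nat k :: complex) ^ n * w1 k))"
    and a2: "\<And>n. summable (\<lambda>k. norm ((of_nat k :: complex) ^ n * w2 k))"
    and S: "lower_unitri S" and Si: "lower_unitri Si" and inv: "imul S Si = iid"
    and gb: "moment w1 w2 = imul (imul Si (idiag h)) (itrans Sti)"
    and St: "lower_unitri St" and inv2: "imul St Sti = iid" and hm: "h m \<noteq> 0"
  shows "(\<Sum>k. typeII S (of_nat k) n * (w1 k * typeI h St X1 (of_nat k) m + w2 k * typeI h St X2 (of_nat k) m))
     = (if n = m then 1 else 0)"
proof -
  have uSt: "ubnd 0 St" using St by (rule ubnd_lower_unitri)
  have "(\<Sum>k. typeII S (of_nat k) n * (w1 k * typeI h St X1 (of_nat k) m + w2 k * typeI h St X2 (of_nat k) m))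
     = (\<Sum>k. (1 / h m) * (\<Sum>j\<le>m. St m j * (typeII S (of_nat k) n * Ew w1 w2 j k)))"
    unfolding Q_eq' by (simp add: sum_distrib_left mult.left_commute)
  also have "\<dots> = (1 / h m) * (\<Sum>j\<le>m. St m j * (\<Sum>k. typeII S (of_nat k) n * Ew w1 w2 j k))"
    by (subst suminf_mult) (auto intro!: summable_sum summable_mult summ_BE[OF a1 a2]
        simp: suminf_sum suminf_mult summ_BE[OF a1 a2])
  also have "\<dots> = (1 / h m) * (h n * (\<Sum>j\<le>m. St m j * Sti j n))"
    by (simp add: BX[OF a1 a2 S Si inv gb] sum_distrib_left mult.left_commute)
  also have "(\<Sum>j\<le>m. St m j * Sti j n) = iid m n"
    using imul_ubnd[OF uSt, of Sti m n] inv2 by simp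
  finally show ?thesis using hm by (auto simp: iid_def)
qed

definition A1p :: "ivec \<Rightarrow> imat \<Rightarrow> nat \<Rightarrow> complex poly" where
  "A1p h St m = (\<Sum>j\<le>m. monom ((1 / h m) * St m j * (if even j then 1 else 0)) (j div 2))"
definition A2p :: "ivec \<Rightarrow> imat \<Rightarrow> nat \<Rightarrow> complex poly" where
  "A2p h St m = (\<Sum>j\<le>m. monom ((1 / h m) * St m j * (if odd j then 1 else 0)) (j div 2))"

lemma poly_A1p: "poly (A1p h St m) z = typeI h St X1 z m"
  unfolding A1p_def typeI_def by (simp add: poly_sum poly_monom sum_distrib_left X1_def mult.assoc) (rule sum.cong, auto)
lemma poly_A2p: "poly (A2p h St m) z = typeI h St X2 z m"
  unfolding A2p_def typeI_def by (simp add: poly_sum poly_monom sum_distrib_left X2_def mult.assoc) (rule sum.cong, auto)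

lemma coeff_A1p: assumes "coeff (A1p h St m) l \<noteq> 0" shows "2 * l \<le> m"
proof (rule ccontr)
  assume "\<not> 2 * l \<le> m"
  then have "coeff (A1p h St m) l = 0"
    unfolding A1p_def coeff_sum coeff_monom by (intro sum.neutral) auto
  then show False using assms by simp
qed

lemma coeff_A2p: assumes "coeff (A2p h St m) l \<noteq> 0" shows "2 * l + 1 \<le> m"
proof (rule ccontr)
  assume a: "\<not> 2 * l + 1 \<le> m"
  have "coeff (A2p h St m) l = 0"
    unfolding A2p_def coeff_sum coeff_monom
  proof (intro sum.neutral ballI)
    fix j assume "j \<in> {..m}"
    then show "(if j div 2 = l then 1 / h m * St m j * (if odd j then 1 else 0) else 0) = 0"
      using a by (auto elim!: oddE)
  qed
  then show False using assms by simp
qed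

lemma coeff_bound:
  fixes p \<sigma> :: "complex poly"
  assumes p: "\<And>l. coeff p l \<noteq> 0 \<Longrightarrow> 2 * l + r \<le> m"
    and c: "coeff (\<sigma> * pcompose p [:1, 1:]) i \<noteq> 0"
  shows "2 * i + r \<le> 2 * degree \<sigma> + m"
proof -
  have "p \<noteq> 0" using c by auto
  then have "coeff p (degree p) \<noteq> 0" by simp
  then have dp: "2 * degree p + r \<le> m" by (rule p)
  have "i \<le> degree (\<sigma> * pcompose p [:1, 1:])" using c by (rule le_degree)
  also have "\<dots> \<le> degree \<sigma> + degree (pcompose p [:1, 1:])" by (rule degree_mult_le)
  also have "degree (pcompose p [:1, 1:]) = degree p" by (simp add: degree_pcompose)
  finally show ?thesis using dp by linarith
qed

lemma poly_upto: fixes P :: "complex poly" assumes "degree P \<le> D" shows "poly P x = (\<Sum>i\<le>D. coeff P i * x ^ i)"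
  unfolding poly_altdef using assms
  by (intro sum.mono_neutral_left) (auto simp: coeff_eq_0)

lemma expand1: fixes P :: "complex poly" assumes "degree P \<le> D" and d: "\<And>i. d (2 * i) = coeff P i"
  shows "poly P x = (\<Sum>j\<le>Suc (2 * D). d j * X1 x j)"
  unfolding sum.in_pairs_0 poly_upto[OF assms(1)] by (simp add: d X1_def)

lemma expand2: fixes P :: "complex poly" assumes "degree P \<le> D" and d: "\<And>i. d (Suc (2 * i)) = coeff P i"
  shows "poly P x = (\<Sum>j\<le>Suc (2 * D). d j * X2 x j)"
  unfolding sum.in_pairs_0 poly_upto[OF assms(1)] by (simp add: d X2_def)

lemma typeI_sum:
  assumes St: "lower_unitri St" and Sti: "lower_unitri Sti" and inv: "imul Sti St = iid"
    and h: "\<And>n. h n \<noteq> 0"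
    and zero: "\<And>n. K < n \<Longrightarrow> c n = 0"
    and cform: "\<And>n. n \<le> K \<Longrightarrow> c n = h n * (\<Sum>j\<le>K. d j * Sti j n)"
  shows "(\<Sum>n. typeI h St Xa z n * c n) = (\<Sum>j\<le>K. d j * Xa z j)"
proof -
  have uSt: "ubnd 0 St" and uSti: "ubnd 0 Sti" using St Sti by (auto intro: ubnd_lower_unitri)
  define u where "u = (\<lambda>n. imul St (icol (Xa z)) n 0)"
  have iu: "icol u = imul St (icol (Xa z))"
    by (intro ext) (simp add: u_def imul_def icol_def)
  have tI: "typeI h St Xa z n = (1 / h n) * u n" for n
    unfolding typeI_def u_def imul_ubnd[OF uSt] by (simp add: icol_def)
  have "(\<Sum>n. typeI h St Xa z n * c n) = (\<Sum>n\<le>K. typeI h St Xa z n * c n)"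
    by (rule suminf_finite) (auto simp: zero)
  also have "\<dots> = (\<Sum>n\<le>K. u n * (\<Sum>j\<le>K. d j * Sti j n))"
    by (intro sum.cong refl) (simp add: tI cform h)
  also have "\<dots> = (\<Sum>j\<le>K. d j * (\<Sum>n\<le>K. Sti j n * u n))"
    by (simp add: sum_distrib_left sum_distrib_right mult_ac) (rule sum.swap)
  also have "\<dots> = (\<Sum>j\<le>K. d j * Xa z j)"
  proof (intro sum.cong refl)
    fix j assume j: "j \<in> {..K}"
    have "(\<Sum>n\<le>K. Sti j n * u n) = imul Sti (icol u) j 0"
      using imul_ubnd'[OF uSti, of "K - j" "icol u" j 0] j by (simp add: icol_def)
    also have "\<dots> = imul (imul Sti St) (icol (Xa z)) j 0"
      unfolding iu imul_assoc[OF uSti uSt] ..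
    also have "\<dots> = Xa z j" by (simp add: inv imul_iid_left icol_def)
    finally show "d j * (\<Sum>n\<le>K. Sti j n * u n) = d j * Xa z j" by simp
  qed
  finally show ?thesis .
qed

theorem mainTheorem7:
  fixes w1 w2 :: "nat \<Rightarrow> complex"
    and S Si St Sti Li :: imat and h :: "nat \<Rightarrow> complex"
    and \<theta> \<sigma>1 \<sigma>2 :: "complex poly" and N M :: nat
  assumes abs_conv1: "\<And>n. summable (\<lambda>k. norm ((of_nat k :: complex) ^ n * w1 k))"
    and abs_conv2: "\<And>n. summable (\<lambda>k. norm ((of_nat k :: complex) ^ n * w2 k))"
    and minors: "\<And>n. lead_minor (moment w1 w2) n \<noteq> 0"
    and S: "lower_unitri S" and Si: "lower_unitri Si"
    and S_inv: "imul S Si = iid" "imul Si S = iid"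
    and St: "lower_unitri St" and Sti: "lower_unitri Sti"
    and St_inv: "imul St Sti = iid" "imul Sti St = iid"
    and gauss_borel: "moment w1 w2 = imul (imul Si (idiag h)) (itrans Sti)"
    and Li: "lower_tri Li" and L_inv: "imul Pascal Li = iid" "imul Li Pascal = iid"
    and pearson1: "\<And>k. poly \<theta> (of_nat (k + 1)) * w1 (k + 1) = poly \<sigma>1 (of_nat k) * w1 k"
    and pearson2: "\<And>k. poly \<theta> (of_nat (k + 1)) * w2 (k + 1) = poly \<sigma>2 (of_nat k) * w2 k"
    and theta0: "poly \<theta> 0 = 0"
    and degN: "degree \<theta> = N"
    and degM: "max (degree \<sigma>1) (degree \<sigma>2) = M"
  defines "\<Psi> \<equiv> imul (imul (imul S Li) Si) (ipoly \<theta> (imul (imul S Lam) Si))"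
  shows "(\<forall>n m. n > m + 2 * M \<longrightarrow> \<Psi> n m = 0)
       \<and> (\<forall>n m. m > n + N \<longrightarrow> \<Psi> n m = 0)
       \<and> (\<forall>z n. poly \<theta> z * typeII S (z - 1) n = (\<Sum>m. \<Psi> n m * typeII S z m))
       \<and> (\<forall>z m. typeI h St X1 (z + 1) m * poly \<sigma>1 z = (\<Sum>n. typeI h St X1 z n * \<Psi> n m))
       \<and> (\<forall>z m. typeI h St X2 (z + 1) m * poly \<sigma>2 z = (\<Sum>n. typeI h St X2 z n * \<Psi> n m))"
proof -
  have uS: "ubnd 0 S" and uSi: "ubnd 0 Si" and uSt: "ubnd 0 St" and uSti: "ubnd 0 Sti"
    and uLi: "ubnd 0 Li"
    using S Si St Sti Li by (auto intro: ubnd_lower_unitri ubnd_lower_tri)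
  have hnz: "\<And>n. h n \<noteq> 0" by (rule h_nonzero[OF Si Sti gauss_borel minors])
  define T where "T = imul (imul S Lam) Si"
  define P where "P = imul (imul S Li) Si"
  have uT: "ubnd 1 T" using ubnd_imul[OF ubnd_imul[OF uS ubnd_Lam] uSi] by (simp add: T_def)
  have uP: "ubnd 0 P" using ubnd_imul[OF ubnd_imul[OF uS uLi] uSi] by (simp add: P_def)
  have uTh: "ubnd N (ipoly \<theta> T)" using ubnd_ipoly[OF uT, of \<theta>] degN by simp
  have PsiPT: "\<Psi> = imul P (ipoly \<theta> T)" unfolding \<Psi>_def P_def T_def ..
  have uPsi: "ubnd N \<Psi>" using ubnd_imul[OF uP uTh] by (simp add: PsiPT)
  have TB: "imul T (icol (typeII S z)) = (\<lambda>i j. z * icol (typeII S z) i j)" for z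
    unfolding T_def by (rule T_B[OF uS uSi S_inv(2)])
  have PB: "imul P (icol (typeII S z)) = icol (typeII S (z - 1))" for z
  proof -
    have "imul P (icol (typeII S z)) = imul (imul S Li) (imul Si (imul S (icol (Xv z))))"
      unfolding P_def typeII_col[OF uS] imul_assoc[OF ubnd_imul[OF uS uLi] uSi] ..
    also have "\<dots> = imul S (imul Li (icol (Xv z)))"
      by (simp add: imul_assoc[symmetric, OF uSi uS] S_inv(2) imul_iid_left imul_assoc[OF uS uLi])
    also have "\<dots> = icol (typeII S (z - 1))"
      by (simp add: Li_X[OF Li L_inv(2)] typeII_col[OF uS])
    finally show ?thesis .
  qed
  have PsiB: "imul \<Psi> (icol (typeII S z)) = (\<lambda>i j. poly \<theta> z * icol (typeII S (z - 1)) i j)" for z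
    unfolding PsiPT imul_assoc[OF uP uTh] Tpoly_B[OF uT TB] imul_scal[OF uP] PB ..
  have claim3: "poly \<theta> z * typeII S (z - 1) n = (\<Sum>m. \<Psi> n m * typeII S z m)" for z n
    using fun_cong[OF fun_cong[OF PsiB[of z], of n], of 0] by (simp add: imul_def icol_def)
  have claim3': "poly \<theta> z * typeII S (z - 1) n = (\<Sum>j\<le>n+N. \<Psi> n j * typeII S z j)" for z n
    using fun_cong[OF fun_cong[OF PsiB[of z], of n], of 0] by (simp add: imul_ubnd[OF uPsi] icol_def)
  define P1 where "P1 m = \<sigma>1 * pcompose (A1p h St m) [:1, 1:]" for m
  define P2 where "P2 m = \<sigma>2 * pcompose (A2p h St m) [:1, 1:]" for m
  define K where "K m = Suc (2 * (M + m))" for m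
  define dd where "dd m j = (if even j then coeff (P1 m) (j div 2) else coeff (P2 m) (j div 2))" for m j
  have dM1: "degree \<sigma>1 \<le> M" and dM2: "degree \<sigma>2 \<le> M" using degM by auto
  have cP1: "2 * i \<le> 2 * M + m" if "coeff (P1 m) i \<noteq> 0" for m i
    using coeff_bound[of "A1p h St m" 0 m \<sigma>1 i] coeff_A1p[of h St m] that dM1 unfolding P1_def by force
  have cP2: "2 * i + 1 \<le> 2 * M + m" if "coeff (P2 m) i \<noteq> 0" for m i
    using coeff_bound[of "A2p h St m" 1 m \<sigma>2 i] coeff_A2p[of h St m] that dM2 unfolding P2_def by force
  have degP1: "degree (P1 m) \<le> M + m" for m
    by (rule degree_le) (use cP1 in force)
  have degP2: "degree (P2 m) \<le> M + m" for m
    by (rule degree_le) (use cP2 in force)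
  have dbound: "j \<le> 2 * M + m" if "dd m j \<noteq> 0" for m j
  proof (cases "even j")
    case True
    then have "coeff (P1 m) (j div 2) \<noteq> 0" using that by (simp add: dd_def)
    from cP1[OF this] True show ?thesis by (auto elim!: evenE)
  next
    case False
    then have "coeff (P2 m) (j div 2) \<noteq> 0" using that by (simp add: dd_def)
    from cP2[OF this] False show ?thesis by (auto elim!: oddE)
  qed
  have exp1: "poly (P1 m) x = (\<Sum>j\<le>K m. dd m j * X1 x j)" for m x
    unfolding K_def by (rule expand1[OF degP1]) (simp add: dd_def)
  have exp2: "poly (P2 m) x = (\<Sum>j\<le>K m. dd m j * X2 x j)" for m x
    unfolding K_def by (rule expand2[OF degP2]) (simp add: dd_def)
  have polyP1: "poly (P1 m) x = poly \<sigma>1 x * typeI h St X1 (x + 1) m" for m x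
    by (simp add: P1_def poly_pcompose poly_A1p add.commute)
  have polyP2: "poly (P2 m) x = poly \<sigma>2 x * typeI h St X2 (x + 1) m" for m x
    by (simp add: P2_def poly_pcompose poly_A2p add.commute)
  have Psi_form: "\<Psi> n m = h n * (\<Sum>j\<le>K m. dd m j * Sti j n)" for n m
  proof -
    define Qf where "Qf k = w1 k * typeI h St X1 (of_nat k) m + w2 k * typeI h St X2 (of_nat k) m" for k
    define g where "g k = poly \<theta> (of_nat k) * typeII S (of_nat k - 1) n * Qf k" for k
    have sBQ: "summable (\<lambda>k. typeII S (of_nat k) j * Qf k)" for j
      unfolding Qf_def by (rule summ_BQ[OF abs_conv1 abs_conv2])
    have bo: "(\<Sum>k. typeII S (of_nat k) j * Qf k) = (if j = m then 1 else 0)" for j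
      unfolding Qf_def by (rule biorth[OF abs_conv1 abs_conv2 S Si S_inv(1) gauss_borel St St_inv(1) hnz])
    have gk: "g k = (\<Sum>j\<le>n+N. \<Psi> n j * (typeII S (of_nat k) j * Qf k))" for k
      unfolding g_def claim3' by (simp add: sum_distrib_right mult.assoc)
    have sg: "summable g"
      unfolding gk by (intro summable_sum summable_mult sBQ)
    have "\<Psi> n m = (\<Sum>j\<le>n+N. \<Psi> n j * (if j = m then 1 else 0))"
    proof -
      have e: "(\<lambda>j. \<Psi> n j * (if j = m then 1 else 0)) = (\<lambda>j. if j = m then \<Psi> n m else 0)" by auto
      show ?thesis unfolding e using ubndD[OF uPsi, of n m] by auto
    qed
    also have "\<dots> = (\<Sum>j\<le>n+N. \<Psi> n j * (\<Sum>k. typeII S (of_nat k) j * Qf k))"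
      by (simp add: bo)
    also have "\<dots> = suminf g"
      unfolding gk by (subst suminf_sum) (auto intro!: summable_mult sBQ simp: suminf_mult sBQ)
    also have "\<dots> = (\<Sum>k. g (Suc k))"
      using suminf_split_head[OF sg] by (simp add: g_def theta0)
    also have "\<dots> = (\<Sum>k. typeII S (of_nat k) n * (\<Sum>j\<le>K m. dd m j * Ew w1 w2 j k))"
    proof (intro suminf_cong)
      fix k
      have p1: "poly \<theta> (of_nat (Suc k)) * w1 (Suc k) = poly \<sigma>1 (of_nat k) * w1 k"
        using pearson1[of k] by simp
      have p2: "poly \<theta> (of_nat (Suc k)) * w2 (Suc k) = poly \<sigma>2 (of_nat k) * w2 k"
        using pearson2[of k] by simp
      have "g (Suc k) = typeII S (of_nat k) n *
          ((poly \<theta> (of_nat (Suc k)) * w1 (Suc k)) * typeI h St X1 (of_nat k + 1) m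
         + (poly \<theta> (of_nat (Suc k)) * w2 (Suc k)) * typeI h St X2 (of_nat k + 1) m)"
        by (simp add: g_def Qf_def algebra_simps)
      also have "\<dots> = typeII S (of_nat k) n * (w1 k * poly (P1 m) (of_nat k) + w2 k * poly (P2 m) (of_nat k))"
        unfolding p1 p2 polyP1 polyP2 by (simp add: algebra_simps)
      also have "\<dots> = typeII S (of_nat k) n * (\<Sum>j\<le>K m. dd m j * Ew w1 w2 j k)"
        unfolding exp1 exp2 Ew_def by (simp add: sum_distrib_left sum.distrib algebra_simps)
      finally show "g (Suc k) = typeII S (of_nat k) n * (\<Sum>j\<le>K m. dd m j * Ew w1 w2 j k)" .
    qed
    also have "\<dots> = (\<Sum>j\<le>K m. dd m j * (\<Sum>k. typeII S (of_nat k) n * Ew w1 w2 j k))"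
      by (simp add: sum_distrib_left mult.left_commute)
        (subst suminf_sum, auto intro!: summable_mult summ_BE[OF abs_conv1 abs_conv2]
          simp: suminf_mult summ_BE[OF abs_conv1 abs_conv2])
    also have "\<dots> = h n * (\<Sum>j\<le>K m. dd m j * Sti j n)"
      by (simp add: BX[OF abs_conv1 abs_conv2 S Si S_inv(1) gauss_borel] sum_distrib_left mult_ac)
    finally show ?thesis .
  qed
  have band: "\<Psi> n m = 0" if "n > m + 2 * M" for n m
  proof -
    have "dd m j * Sti j n = 0" if "j \<le> K m" for j
    proof (cases "dd m j = 0")
      case False
      then have "j \<le> 2 * M + m" by (rule dbound)
      then have "j + 0 < n" using \<open>n > m + 2 * M\<close> by simp
      then show ?thesis using ubndD[OF uSti] by simp
    qed simp
    then have "(\<Sum>j\<le>K m. dd m j * Sti j n) = 0" by (intro sum.neutral) auto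
    then show ?thesis unfolding Psi_form by simp
  qed
  have typeIa: "(\<Sum>n. typeI h St Xa z n * \<Psi> n m) = (\<Sum>j\<le>K m. dd m j * Xa z j)" for Xa z m
    by (rule typeI_sum[OF St Sti St_inv(2) hnz]) (rule band, simp add: K_def, rule Psi_form)
  show ?thesis
  proof (intro conjI allI impI)
    fix n m :: nat assume "n > m + 2 * M" then show "\<Psi> n m = 0" by (rule band)
  next
    fix n m :: nat assume "m > n + N" then show "\<Psi> n m = 0" using ubndD[OF uPsi] by simp
  next
    fix z n show "poly \<theta> z * typeII S (z - 1) n = (\<Sum>m. \<Psi> n m * typeII S z m)" by (rule claim3)
  next
    fix z m show "typeI h St X1 (z + 1) m * poly \<sigma>1 z = (\<Sum>n. typeI h St X1 z n * \<Psi> n m)"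
      unfolding typeIa exp1[symmetric] polyP1 by simp
  next
    fix z m show "typeI h St X2 (z + 1) m * poly \<sigma>2 z = (\<Sum>n. typeI h St X2 z n * \<Psi> n m)"
      unfolding typeIa exp2[symmetric] polyP2 by simp
  qed
qed

end
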